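(* Let $f\colon\mathbb{R}\to\mathbb{R}$ be cliquish. Then $f$ is a Świątkowski function if and only if $f$ satisfies the condition $S(\mathbb{R},A,0)$ for every residual set $A\subset\mathbb{R}$.
   Context: $\mathrm{C}(f)$ denotes the set of continuity points of $f$. $f$ is cliquish if for all $a<b$ and every $\varepsilon>0$ there is a nondegenerate interval $I\subset(a,b)$ with $\operatorname{diam} f[I]<\varepsilon$. $f$ is a Świątkowski function if for all $a<b$ with $f(a)\neq f(b)$ there is $x\in(a,b)\cap\mathrm{C}(f)$ with $f(x)$ strictly between $f(a)$ and $f(b)$. For $a,b\in\mathbb{R}$, $I(a,b)$ denotes the open interval with end-points $a,b$. For $A\subset\mathbb{R}$, an interval $J$ and $\varepsilon\ge0$, $f$ satisfies $S(J,A,\varepsilon)$ if for all $a,b\in J$ with $f(a)<f(b)$ there exists $x\in A\cap I(a,b)$ with $f(x)\in(f(a)-\varepsilon,f(b)+\varepsilon)$. A set is residual if its complement is meager. *)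

theory Defs
  imports "HOL-Analysis.Analysis"
begin

definition nowhere_dense :: "real set \<Rightarrow> bool" where
  "nowhere_dense S \<longleftrightarrow> interior (closure S) = {}"

definition meager :: "real set \<Rightarrow> bool" where
  "meager A \<longleftrightarrow> (\<exists>N :: nat \<Rightarrow> real set. (\<forall>n. nowhere_dense (N n)) \<and> A \<subseteq> (\<Union>n. N n))"

definition residual :: "real set \<Rightarrow> bool" where
  "residual A \<longleftrightarrow> meager (- A)"

definition oint :: "real \<Rightarrow> real \<Rightarrow> real set" where
  "oint a b = {min a b<..<max a b}"

text \<open>Cliquish: every (a,b) contains a nondegenerate interval I with diam f[I] < eps.
  Nondegenerate intervals are taken open (every nondegenerate interval contains one);
  diam f[I] < eps is written as: sup of |f x - f y| over I is bounded by some d < eps.\<close>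
definition cliquish :: "(real \<Rightarrow> real) \<Rightarrow> bool" where
  "cliquish f \<longleftrightarrow> (\<forall>a b \<epsilon>. a < b \<longrightarrow> \<epsilon> > 0 \<longrightarrow>
     (\<exists>c d. a \<le> c \<and> c < d \<and> d \<le> b \<and>
        (\<exists>\<delta> < \<epsilon>. \<forall>x\<in>{c<..<d}. \<forall>y\<in>{c<..<d}. \<bar>f x - f y\<bar> \<le> \<delta>)))"

definition swiatkowski :: "(real \<Rightarrow> real) \<Rightarrow> bool" where
  "swiatkowski f \<longleftrightarrow> (\<forall>a b. a < b \<longrightarrow> f a \<noteq> f b \<longrightarrow>
     (\<exists>x\<in>{a<..<b}. isCont f x \<and> min (f a) (f b) < f x \<and> f x < max (f a) (f b)))"

definition condS :: "(real \<Rightarrow> real) \<Rightarrow> real set \<Rightarrow> real set \<Rightarrow> real \<Rightarrow> bool" where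
  "condS f J A \<epsilon> \<longleftrightarrow> (\<forall>a\<in>J. \<forall>b\<in>J. f a < f b \<longrightarrow>
     (\<exists>x\<in>A \<inter> oint a b. f a - \<epsilon> < f x \<and> f x < f b + \<epsilon>))"

end

theory Submission
  imports Defs
begin

lemma residual_dense:
  assumes "residual A"
  shows "closure A = UNIV"
proof -
  obtain N :: "nat \<Rightarrow> real set" where N: "\<And>n. nowhere_dense (N n)" and sub: "- A \<subseteq> (\<Union>n. N n)"
    using assms unfolding residual_def meager_def by blast
  let ?G = "range (\<lambda>n. - closure (N n))"
  have "(UNIV::real set) \<subseteq> closure (\<Inter>?G)"
  proof (rule Baire)
    show "closed (UNIV::real set)" by simp
    show "countable ?G" by simp
    fix T assume "T \<in> ?G"
    then obtain n where T: "T = - closure (N n)" by blast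
    have "closure T = UNIV"
      using N[of n] unfolding T nowhere_dense_def by (simp add: closure_complement)
    then show "openin (top_of_set UNIV) T \<and> UNIV \<subseteq> closure T"
      using T by auto
  qed
  moreover have "\<Inter>?G \<subseteq> A"
  proof
    fix x assume x: "x \<in> \<Inter>?G"
    show "x \<in> A"
    proof (rule ccontr)
      assume "x \<notin> A"
      then obtain n where "x \<in> N n" using sub by blast
      then have "x \<in> closure (N n)" using closure_subset by blast
      moreover have "x \<in> - closure (N n)" using x by blast
      ultimately show False by simp
    qed
  qed
  ultimately show ?thesis using closure_mono[of "\<Inter>?G" A] by auto
qed

lemma residual_meets_open:
  assumes "residual A" "open U" "U \<noteq> {}"
  shows "U \<inter> A \<noteq> {}"
  using residual_dense[OF assms(1)] assms(2,3)
  using open_Int_closure_eq_empty[of U A] by auto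

lemma cliquish_residual:
  assumes "cliquish f"
  shows "residual {x. isCont f x}"
proof -
  define D where "D n = {x. \<forall>r>0. \<exists>y z. dist y x < r \<and> dist z x < r \<and> \<bar>f y - f z\<bar> \<ge> 1 / (real n + 1)}" for n
  have nd: "nowhere_dense (D n)" for n
  proof -
    have "interior (closure (D n)) = {}"
    proof (rule ccontr)
      assume "interior (closure (D n)) \<noteq> {}"
      then obtain x where x: "x \<in> interior (closure (D n))" by blast
      then obtain e where e: "e > 0" "ball x e \<subseteq> closure (D n)"
        using x unfolding mem_interior by blast
      have "x - e < x + e" using e by simp
      moreover have pos: "1 / (real n + 1) > 0" by simp
      ultimately obtain c d \<delta> where cd: "x - e \<le> c" "c < d" "d \<le> x + e" "\<delta> < 1 / (real n + 1)"
        and osc: "\<forall>u\<in>{c<..<d}. \<forall>v\<in>{c<..<d}. \<bar>f u - f v\<bar> \<le> \<delta>"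
        using assms[unfolded cliquish_def, rule_format, of "x - e" "x + e" "1 / (real n + 1)"]
        by blast
      let ?m = "(c + d) / 2"
      have "x - e < ?m" "?m < x + e" using cd by (simp_all add: field_simps)
      then have "?m \<in> ball x e" by (simp add: dist_real_def abs_less_iff field_simps)
      then have "?m \<in> closure (D n)" using e by blast
      moreover have "open {c<..<d}" "?m \<in> {c<..<d}" using cd by auto
      ultimately have "{c<..<d} \<inter> D n \<noteq> {}"
        using open_Int_closure_eq_empty[of "{c<..<d}" "D n"] by blast
      then obtain p where p: "p \<in> D n" "p \<in> {c<..<d}" by blast
      define r where "r = min (p - c) (d - p)"
      have r: "r > 0" using p by (auto simp: r_def)
      have "\<forall>r>0. \<exists>y z. dist y p < r \<and> dist z p < r \<and> \<bar>f y - f z\<bar> \<ge> 1 / (real n + 1)"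
        using p(1) unfolding D_def by simp
      then obtain y z where yz: "dist y p < r" "dist z p < r" "\<bar>f y - f z\<bar> \<ge> 1 / (real n + 1)"
        using r by blast
      have rr: "r \<le> p - c" "r \<le> d - p" unfolding r_def by (rule min.cobounded1, rule min.cobounded2)
      have ya: "\<bar>y - p\<bar> < r" "\<bar>z - p\<bar> < r" using yz(1,2) by (simp_all add: dist_real_def)
      have "c < y" "y < d" "c < z" "z < d" using rr ya by arith+
      then have "y \<in> {c<..<d}" "z \<in> {c<..<d}" by simp_all
      then have "\<bar>f y - f z\<bar> \<le> \<delta>" using osc by blast
      then show False using yz cd by linarith
    qed
    then show ?thesis by (simp add: nowhere_dense_def)
  qed
  have "- {x. isCont f x} \<subseteq> (\<Union>n. D n)"
  proof
    fix x assume "x \<in> - {x. isCont f x}"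
    then have nc: "\<not> isCont f x" by simp
    show "x \<in> (\<Union>n. D n)"
    proof (rule ccontr)
      assume "x \<notin> (\<Union>n. D n)"
      have H: "\<exists>r>0. \<forall>y z. dist y x < r \<longrightarrow> dist z x < r \<longrightarrow> \<bar>f y - f z\<bar> < 1 / (real n + 1)" for n
      proof -
        have "x \<notin> D n" using \<open>x \<notin> (\<Union>n. D n)\<close> by blast
        then have "\<not> (\<forall>r>0. \<exists>y z. dist y x < r \<and> dist z x < r \<and> \<bar>f y - f z\<bar> \<ge> 1 / (real n + 1))"
          unfolding D_def by simp
        then obtain r where "r > 0" "\<forall>y z. \<not> (dist y x < r \<and> dist z x < r \<and> \<bar>f y - f z\<bar> \<ge> 1 / (real n + 1))"
          by blast
        then show ?thesis using not_le by blast
      qed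
      have "isCont f x"
        unfolding continuous_at_eps_delta
      proof (intro allI impI)
        fix e :: real assume "e > 0"
        obtain n where "1 / real (Suc n) < e"
          using nat_approx_posE[OF \<open>e > 0\<close>] by blast
        then have n: "1 / (real n + 1) < e" by (metis add.commute of_nat_Suc)
        obtain r where r: "r > 0" "\<forall>y z. dist y x < r \<longrightarrow> dist z x < r \<longrightarrow> \<bar>f y - f z\<bar> < 1 / (real n + 1)"
          using H[of n] by blast
        show "\<exists>d>0. \<forall>y. dist y x < d \<longrightarrow> dist (f y) (f x) < e"
        proof (intro exI[of _ r] conjI allI impI)
          fix y assume "dist y x < r"
          then have "\<bar>f y - f x\<bar> < 1 / (real n + 1)" using r by simp
          then show "dist (f y) (f x) < e" using n by (simp add: dist_real_def)
        qed (rule r(1))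
      qed
      then show False using nc by simp
    qed
  qed
  then show ?thesis unfolding residual_def meager_def using nd by (intro exI[of _ D]) simp
qed

theorem mainTheorem3:
  fixes f :: "real \<Rightarrow> real"
  assumes "cliquish f"
  shows "swiatkowski f \<longleftrightarrow> (\<forall>A. residual A \<longrightarrow> condS f UNIV A 0)"
proof
  assume sw: "swiatkowski f"
  show "\<forall>A. residual A \<longrightarrow> condS f UNIV A 0"
  proof (intro allI impI)
    fix A assume A: "residual A"
    show "condS f UNIV A 0"
      unfolding condS_def
    proof (intro ballI impI)
      fix a b assume ab: "f a < f b"
      define lo where "lo = min a b"
      define hi where "hi = max a b"
      have "a \<noteq> b" using ab by auto
      then have lh: "lo < hi" by (auto simp: lo_def hi_def)
      have fm: "min (f lo) (f hi) = f a" "max (f lo) (f hi) = f b"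
        using ab by (auto simp: lo_def hi_def min_def max_def)
      have "f lo \<noteq> f hi" using fm ab by auto
      then have "\<exists>x\<in>{lo<..<hi}. isCont f x \<and> min (f lo) (f hi) < f x \<and> f x < max (f lo) (f hi)"
        using sw lh unfolding swiatkowski_def by blast
      then obtain x where x: "x \<in> {lo<..<hi}" "isCont f x" "f a < f x" "f x < f b"
        unfolding fm by blast
      define e where "e = min (f x - f a) (f b - f x)"
      have "e > 0" using x by (simp add: e_def)
      then obtain d where d: "d > 0" "\<forall>y. dist y x < d \<longrightarrow> dist (f y) (f x) < e"
        using x(2) unfolding continuous_at_eps_delta by blast
      have "x \<in> ball x d \<inter> {lo<..<hi}" using x d by auto
      then have ne: "ball x d \<inter> {lo<..<hi} \<noteq> {}" by blast
      have op: "open (ball x d \<inter> {lo<..<hi})" by (intro open_Int open_ball open_greaterThanLessThan)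
      have "(ball x d \<inter> {lo<..<hi}) \<inter> A \<noteq> {}"
        by (rule residual_meets_open[OF A op ne])
      then obtain y where y0: "y \<in> A" "y \<in> ball x d" "y \<in> {lo<..<hi}"
        by blast
      have "dist y x < d" using y0(2) by (simp add: dist_commute)
      note y = y0(1) this y0(3)
      have "\<bar>f y - f x\<bar> < e" using d y by (simp add: dist_real_def)
      then have "f a - 0 < f y \<and> f y < f b + 0" by (auto simp: e_def)
      moreover have "y \<in> A \<inter> oint a b" using y by (simp add: oint_def lo_def hi_def)
      ultimately show "\<exists>x\<in>A \<inter> oint a b. f a - 0 < f x \<and> f x < f b + 0" by blast
    qed
  qed
next
  assume S: "\<forall>A. residual A \<longrightarrow> condS f UNIV A 0"
  then have C: "condS f UNIV {x. isCont f x} 0" using cliquish_residual[OF assms] by blast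
  show "swiatkowski f"
    unfolding swiatkowski_def
  proof (intro allI impI)
    fix a b :: real assume ab: "a < b" "f a \<noteq> f b"
    have oi: "oint a b = {a<..<b}" "oint b a = {a<..<b}" using ab by (auto simp: oint_def)
    show "\<exists>x\<in>{a<..<b}. isCont f x \<and> min (f a) (f b) < f x \<and> f x < max (f a) (f b)"
    proof (cases "f a < f b")
      case True
      then obtain x where "x \<in> {x. isCont f x} \<inter> oint a b" "f a - 0 < f x" "f x < f b + 0"
        using C unfolding condS_def by blast
      then show ?thesis using True oi by auto
    next
      case False
      then have "f b < f a" using ab by auto
      then obtain x where "x \<in> {x. isCont f x} \<inter> oint b a" "f b - 0 < f x" "f x < f a + 0"
        using C unfolding condS_def by blast
      then show ?thesis using False oi by auto
    qed
  qed
qed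

end
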